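(* Let $\mathcal{V}$ be the complex vector space spanned by $\phi_k(x)=(x\frac{d}{dx})^k\big(\frac{1}{1-x}\big)$, $k\in\mathbb{N}=\{0,1,2,\dots\}$. If a nonzero $f\in\mathcal{V}$ is an eigenfunction of $U_p$ for some integer $p\ge2$, then $f$ is an eigenfunction of $U_q$ for every integer $q\ge2$.
   Context: For a power series $f(x)=\sum_{n\ge0}a_nx^n$ (in particular the Taylor expansion at $0$ of a rational function regular at $0$) and a positive integer $q$, $U_qf(x)=\sum_{n\ge0}a_{qn}x^n$. *)

theory Defs
  imports "HOL-Computational_Algebra.Formal_Power_Series"
begin

definition euler_op :: "complex fps \<Rightarrow> complex fps" where
  "euler_op f = fps_X * fps_deriv f"

text \<open>phi k = (x d/dx)^k (1/(1-x)), as a formal power series (Taylor expansion at 0).\<close>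
definition phi :: "nat \<Rightarrow> complex fps" where
  "phi k = (euler_op ^^ k) (inverse (1 - fps_X))"

definition Vspace :: "complex fps set" where
  "Vspace = {f. \<exists>S c. finite S \<and> f = (\<Sum>k\<in>S. fps_const (c k) * phi k)}"

definition Uop :: "nat \<Rightarrow> complex fps \<Rightarrow> complex fps" where
  "Uop q f = Abs_fps (\<lambda>n. fps_nth f (q * n))"

definition eigenfunction :: "nat \<Rightarrow> complex fps \<Rightarrow> bool" where
  "eigenfunction q f \<longleftrightarrow> f \<noteq> 0 \<and> (\<exists>c::complex. Uop q f = fps_const c * f)"

end

theory Submission
  imports Defs "HOL-Computational_Algebra.Polynomial"
begin

lemma phi_nth: "fps_nth (phi k) n = (of_nat n :: complex) ^ k"
proof (induction k arbitrary: n)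
  case 0
  then show ?case by (simp add: phi_def fps_inverse_one_minus_fps_X)
next
  case (Suc k)
  have "phi (Suc k) = euler_op (phi k)" by (simp add: phi_def)
  then show ?case using Suc
    by (cases n) (simp_all add: euler_op_def)
qed

lemma V_nth:
  assumes "f = (\<Sum>k\<in>S. fps_const (c k) * phi k)"
  shows "fps_nth (f) n = (\<Sum>k\<in>S. c k * of_nat n ^ k)"
  using assms by (simp add: fps_sum_nth phi_nth)

lemma sum_pow_zero:
  fixes b :: "nat \<Rightarrow> complex"
  assumes "finite S" and "\<And>n::nat. (\<Sum>k\<in>S. b k * of_nat n ^ k) = 0" and "k \<in> S"
  shows "b k = 0"
proof -
  define Q where "Q = (\<Sum>k\<in>S. monom (b k) k)"
  have pQ: "poly Q x = (\<Sum>k\<in>S. b k * x ^ k)" for x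
    by (simp add: Q_def poly_sum poly_monom)
  have "Q = 0"
  proof (rule ccontr)
    assume "Q \<noteq> 0"
    then have "finite {x. poly Q x = 0}" by (rule poly_roots_finite)
    moreover have "range (of_nat :: nat \<Rightarrow> complex) \<subseteq> {x. poly Q x = 0}"
      using assms(2) pQ by auto
    moreover have "infinite (range (of_nat :: nat \<Rightarrow> complex))"
      using range_inj_infinite[of "of_nat :: nat \<Rightarrow> complex"] inj_of_nat by blast
    ultimately show False using finite_subset by blast
  qed
  have "coeff Q k = b k"
    using assms(1,3) by (simp add: Q_def coeff_sum coeff_monom)
  then show ?thesis using \<open>Q = 0\<close> by simp
qed

theorem mainTheorem16:
  fixes f :: "complex fps" and p :: nat
  assumes "f \<in> Vspace" and "f \<noteq> 0" and "p \<ge> 2" and "eigenfunction p f"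
  shows "\<forall>q::nat. q \<ge> 2 \<longrightarrow> eigenfunction q f"
proof -
  obtain S c where S: "finite S" and fS: "f = (\<Sum>k\<in>S. fps_const (c k) * phi k)"
    using assms(1) unfolding Vspace_def by blast
  have fn: "fps_nth (f) n = (\<Sum>k\<in>S. c k * of_nat n ^ k)" for n using V_nth[OF fS] .
  obtain lam where lam: "Uop p f = fps_const lam * f"
    using assms(4) unfolding eigenfunction_def by blast
  have eq: "(\<Sum>k\<in>S. c k * of_nat (p*n) ^ k) = lam * (\<Sum>k\<in>S. c k * of_nat n ^ k)" for n
  proof -
    have "fps_nth (Uop p f) n = fps_nth ((fps_const lam * f)) n" using lam by simp
    then show ?thesis by (simp add: Uop_def fn)
  qed
  have zero: "(c k * (of_nat p ^ k - lam)) = 0" if "k \<in> S" for k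
  proof (rule sum_pow_zero[OF S _ that, where b = "\<lambda>k. c k * (of_nat p ^ k - lam)"])
    fix n :: nat
    have "(\<Sum>k\<in>S. c k * (of_nat p ^ k - lam) * of_nat n ^ k)
        = (\<Sum>k\<in>S. c k * of_nat (p*n) ^ k) - lam * (\<Sum>k\<in>S. c k * of_nat n ^ k)"
      by (simp add: sum_subtractf sum_distrib_left algebra_simps power_mult_distrib)
    then show "(\<Sum>k\<in>S. c k * (of_nat p ^ k - lam) * of_nat n ^ k) = 0" using eq[of n] by simp
  qed
  have "\<exists>d\<in>S. c d \<noteq> 0"
  proof (rule ccontr)
    assume "\<not> (\<exists>d\<in>S. c d \<noteq> 0)"
    then have "\<forall>k\<in>S. c k = 0" by blast
    then have "f = 0" using fS by simp
    then show False using assms(2) by simp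
  qed
  then obtain d where dS: "d \<in> S" and cd: "c d \<noteq> 0" by blast
  have uniq: "k = d" if "k \<in> S" "c k \<noteq> 0" for k
  proof -
    have "(of_nat p :: complex) ^ k = lam" using zero[OF that(1)] that(2) by simp
    moreover have "(of_nat p :: complex) ^ d = lam" using zero[OF dS] cd by simp
    ultimately have "(of_nat (p ^ k) :: complex) = of_nat (p ^ d)" by simp
    then have "p ^ k = p ^ d" using of_nat_eq_iff by blast
    then show ?thesis using assms(3) by (simp add: power_inject_exp)
  qed
  show ?thesis
  proof (intro allI impI)
    fix q :: nat assume "q \<ge> 2"
    have "Uop q f = fps_const (of_nat q ^ d) * f"
    proof (rule fps_ext)
      fix n
      have "(\<Sum>k\<in>S. c k * of_nat (q*n) ^ k) = (\<Sum>k\<in>S. of_nat q ^ d * (c k * of_nat n ^ k))"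
      proof (rule sum.cong[OF refl])
        fix k assume "k \<in> S"
        show "c k * of_nat (q*n) ^ k = of_nat q ^ d * (c k * of_nat n ^ k)"
          using uniq[OF \<open>k \<in> S\<close>] by (cases "c k = 0") (auto simp: power_mult_distrib)
      qed
      then show "fps_nth (Uop q f) n = fps_nth ((fps_const (of_nat q ^ d) * f)) n"
        by (simp add: Uop_def fn sum_distrib_left)
    qed
    then show "eigenfunction q f" using assms(2) unfolding eigenfunction_def by blast
  qed
qed

end
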